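(* There is a constant $c>0$ such that for all integers $n\ge 2$ and $k\in\mathbb{N}$, the randomized query complexity of $TARSKI(n,k)$ is at least $ck$.
   Context: For $k,n\in\mathbb{N}$ let $\mathcal{L}_n^k=\{0,1,\ldots,n-1\}^k$ with the componentwise order. $TARSKI(n,k)$: given oracle access to an unknown monotone $f:\mathcal{L}_n^k\to\mathcal{L}_n^k$ (a query of $v$ returns $f(v)$), find $x$ with $f(x)=x$. The randomized query complexity is the minimum, over randomized algorithms that on every input output a fixed point with probability at least $9/10$, of the worst-case expected number of queries (expectation over the algorithm's coins). *)

theory Defs
  imports "HOL-Probability.Probability"
begin

definition grid :: "nat \<Rightarrow> nat \<Rightarrow> nat list set" where
  "grid n k = {x. length x = k \<and> (\<forall>i<k. x ! i < n)}"

definition cw_le :: "nat list \<Rightarrow> nat list \<Rightarrow> bool" where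
  "cw_le x y = list_all2 (\<le>) x y"

text \<open>Outside the grid
  the function is fixed to the canonical value [] (so it carries no information;
  this identifies functions on the grid with total functions).\<close>
definition tarski_input :: "nat \<Rightarrow> nat \<Rightarrow> (nat list \<Rightarrow> nat list) \<Rightarrow> bool" where
  "tarski_input n k f \<longleftrightarrow>
     (\<forall>x\<in>grid n k. f x \<in> grid n k) \<and>
     (\<forall>x\<in>grid n k. \<forall>y\<in>grid n k. cw_le x y \<longrightarrow> cw_le (f x) (f y)) \<and>
     (\<forall>x. x \<notin> grid n k \<longrightarrow> f x = [])"

text \<open>Deterministic adaptive query algorithms (decision trees): either output a
  point, or query a point and continue depending on the oracle's answer.\<close>
datatype qtree = Out "nat list" | Ask "nat list" "nat list \<Rightarrow> qtree"

primrec run :: "(nat list \<Rightarrow> nat list) \<Rightarrow> qtree \<Rightarrow> nat list \<times> nat" where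
  "run f (Out x) = (x, 0)"
| "run f (Ask v g) = (case run f (g (f v)) of (x, q) \<Rightarrow> (x, Suc q))"

text \<open>A randomized algorithm is a probability distribution over deterministic trees.\<close>
definition success_prob :: "nat \<Rightarrow> nat \<Rightarrow> qtree pmf \<Rightarrow> (nat list \<Rightarrow> nat list) \<Rightarrow> real" where
  "success_prob n k A f =
     measure_pmf.prob A {t. fst (run f t) \<in> grid n k \<and> f (fst (run f t)) = fst (run f t)}"

definition expected_queries :: "qtree pmf \<Rightarrow> (nat list \<Rightarrow> nat list) \<Rightarrow> ennreal" where
  "expected_queries A f = (\<integral>\<^sup>+ t. ennreal (real (snd (run f t))) \<partial>measure_pmf A)"

definition valid_alg :: "nat \<Rightarrow> nat \<Rightarrow> qtree pmf \<Rightarrow> bool" where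
  "valid_alg n k A \<longleftrightarrow> (\<forall>f. tarski_input n k f \<longrightarrow> success_prob n k A f \<ge> 9/10)"

definition rand_query_complexity :: "nat \<Rightarrow> nat \<Rightarrow> ennreal" where
  "rand_query_complexity n k =
     (INF A \<in> {A. valid_alg n k A}. SUP f \<in> {f. tarski_input n k f}. expected_queries A f)"

end

theory Submission
  imports Defs
begin


fun Fo :: "nat \<Rightarrow> nat list \<Rightarrow> nat list \<Rightarrow> nat list" where
  "Fo n (a#s) (b#x) = (if b = a then a # Fo n s x
     else if b < a then a # replicate (length s) 0 else a # replicate (length s) (n-1))"
| "Fo n _ _ = []"

fun cpl :: "nat list \<Rightarrow> nat list \<Rightarrow> nat" where
  "cpl (a#s) (b#v) = (if a = b then Suc (cpl s v) else 0)"
| "cpl _ _ = 0"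

lemma length_Fo: "length x = length s \<Longrightarrow> length (Fo n s x) = length s"
  by (induction n s x rule: Fo.induct) auto

lemma set_Fo: "set s \<subseteq> {..<n} \<Longrightarrow> 0 < n \<Longrightarrow> set (Fo n s x) \<subseteq> {..<n}"
  by (induction n s x rule: Fo.induct) auto

lemma Fo_self: "Fo n s s = s"
  by (induction s) auto

lemma Fo_fix: "Fo n s x = x \<Longrightarrow> length x = length s \<Longrightarrow> x = s"
  by (induction n s x rule: Fo.induct) (auto split: if_splits)

lemma Fo_mono: "list_all2 (\<le>) x y \<Longrightarrow> length x = length s \<Longrightarrow> set s \<subseteq> {..<n}
   \<Longrightarrow> list_all2 (\<le>) (Fo n s x) (Fo n s y)"
proof (induction s arbitrary: x y)
  case Nil
  then show ?case by simp
next
  case (Cons a s)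
  then obtain b x' c y' where xy: "x = b#x'" "y = c#y'" "b \<le> c" "list_all2 (\<le>) x' y'"
    by (cases x; cases y) auto
  have l: "length y' = length s" using Cons xy by (auto dest: list_all2_lengthD)
  have lx: "length x' = length s" using Cons xy by auto
  have allF: "list_all2 (\<le>) (Fo n s z) (replicate (length s) (n-1))" if "length z = length s" for z
  proof -
    have "set (Fo n s z) \<subseteq> {..<n}" using set_Fo[of s n z] Cons by auto
    then have h: "\<And>i. i < length s \<Longrightarrow> Fo n s z ! i < n"
      using length_Fo[OF that, of n] nth_mem[of _ "Fo n s z"] by fastforce
    have h2: "Fo n s z ! i \<le> n - 1" if "i < length s" for i
      using h[OF that] by arith
    show ?thesis using length_Fo[OF that, of n] h2
      by (auto simp: list_all2_conv_all_nth)
  qed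
  have allZ: "list_all2 (\<le>) (replicate (length s) 0) w" if "length w = length s" for w :: "nat list"
    using that by (auto simp: list_all2_conv_all_nth)
  have fy: "length (Fo n s y') = length s" using length_Fo[OF l] .
  have rr: "list_all2 (\<le>) (replicate (length s) (0::nat)) (replicate (length s) (n-1))"
    using allZ[of "replicate (length s) (n-1)"] by simp
  have rr2: "list_all2 (\<le>) (replicate (length s) (n-1)) (replicate (length s) (n-1))"
    by (simp add: list_all2_refl)
  have rr3: "list_all2 (\<le>) (replicate (length s) (0::nat)) (replicate (length s) 0)"
    by (simp add: list_all2_refl)
  have IH: "list_all2 (\<le>) (Fo n s x') (Fo n s y')" using Cons.IH xy lx Cons.prems by auto
  show ?case
  proof (cases "b = a")
    case True
    then show ?thesis using xy IH allF[OF lx] by auto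
  next
    case False
    then show ?thesis using xy allZ[OF fy] rr rr2 rr3 by auto
  qed
qed

lemma cpl_le: "cpl s v \<le> length s"
  by (induction s v rule: cpl.induct) auto

lemma cpl_take: "take (cpl s v) s = take (cpl s v) v"
  by (induction s v rule: cpl.induct) simp_all

lemma cpl_lt: "length s \<le> length v \<Longrightarrow> cpl s v < length s \<Longrightarrow> cpl s v < length v \<and> s ! cpl s v \<noteq> v ! cpl s v"
  by (induction s v rule: cpl.induct) (simp_all split: if_splits)

lemma Fo_agree: "length s = length s' \<Longrightarrow> take (Suc (cpl s v)) s = take (Suc (cpl s v)) s'
   \<Longrightarrow> Fo n s v = Fo n s' v \<and> cpl s' v = cpl s v"
proof (induction s arbitrary: s' v)
  case Nil
  then show ?case by simp
next
  case (Cons a s)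
  obtain a' t where s': "s' = a'#t" using Cons.prems(1) by (cases s') auto
  show ?case
  proof (cases v)
    case Nil
    then show ?thesis using s' by simp
  next
    case (Cons b w)
    show ?thesis
    proof (cases "a = b")
      case True
      then have "length s = length t" "take (Suc (cpl s w)) s = take (Suc (cpl s w)) t"
        using Cons.prems s' \<open>v = b#w\<close> by auto
      then have "Fo n s w = Fo n t w \<and> cpl t w = cpl s w" by (rule Cons.IH)
      then show ?thesis using True s' \<open>v = b#w\<close> Cons.prems by auto
    next
      case False
      then have "a' = a" "length t = length s" using Cons.prems s' \<open>v = b#w\<close> by auto
      then show ?thesis using False s' \<open>v = b#w\<close> by auto
    qed
  qed
qed


definition orc :: "nat \<Rightarrow> nat \<Rightarrow> nat list \<Rightarrow> nat list \<Rightarrow> nat list" where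
  "orc n k s x = (if x \<in> grid n k then Fo n s x else [])"

lemma grid_alt: "grid n k = {xs. set xs \<subseteq> {..<n} \<and> length xs = k}"
  apply (auto simp: grid_def in_set_conv_nth)
  apply (metis lessThan_iff nth_mem subsetD)
  done

lemma finite_grid: "finite (grid n k)"
  unfolding grid_alt by (rule finite_lists_length_eq) simp

lemma card_grid: "card (grid n k) = n ^ k"
  unfolding grid_alt by (subst card_lists_length_eq) simp_all

lemma grid_mono: "m \<le> n \<Longrightarrow> grid m k \<subseteq> grid n k"
  unfolding grid_alt by auto

lemma orc_tarski:
  assumes "2 \<le> n" "s \<in> grid 2 k"
  shows "tarski_input n k (orc n k s)"
proof -
  have s: "set s \<subseteq> {..<n}" "length s = k" using assms unfolding grid_alt by auto
  have 1: "orc n k s x \<in> grid n k" if "x \<in> grid n k" for x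
  proof -
    have "length x = k" using that unfolding grid_alt by auto
    then have "length (Fo n s x) = k" using length_Fo s by metis
    moreover have "set (Fo n s x) \<subseteq> {..<n}" using set_Fo[OF s(1)] assms(1) by auto
    ultimately show ?thesis using that unfolding orc_def grid_alt by auto
  qed
  have 2: "cw_le (orc n k s x) (orc n k s y)" if "x \<in> grid n k" "y \<in> grid n k" "cw_le x y" for x y
  proof -
    have "length x = k" using that unfolding grid_alt by auto
    then show ?thesis using that Fo_mono[of x y s n] s unfolding orc_def cw_le_def by auto
  qed
  show ?thesis unfolding tarski_input_def using 1 2 by (auto simp: orc_def)
qed

lemma orc_fix:
  assumes "s \<in> grid 2 k" "x \<in> grid n k" "orc n k s x = x"
  shows "x = s"
proof -
  have "length x = length s" using assms unfolding grid_alt by auto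
  then show ?thesis using Fo_fix[of n s x] assms by (auto simp: orc_def)
qed

definition succset :: "nat \<Rightarrow> nat \<Rightarrow> qtree \<Rightarrow> nat list \<Rightarrow> nat \<Rightarrow> nat list set" where
  "succset n k t a d = {s \<in> grid 2 k. take (length a) s = a \<and>
     snd (run (orc n k s) t) \<le> d \<and> fst (run (orc n k s) t) = s}"

lemma run_Ask: "run f (Ask v g) = (fst (run f (g (f v))), Suc (snd (run f (g (f v)))))"
  by (simp split: prod.splits)

lemma geo: "p \<le> k \<Longrightarrow> (\<Sum>r\<in>{p..<k}. (3/2::real)^(k - Suc r)) = 2*(3/2)^(k-p) - 2"
proof (induction k)
  case 0
  then show ?case by simp
next
  case (Suc k)
  show ?case
  proof (cases "p = Suc k")
    case True
    then show ?thesis by simp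
  next
    case False
    then have pk: "p \<le> k" using Suc.prems by simp
    have "(\<Sum>r\<in>{p..<Suc k}. (3/2::real)^(Suc k - Suc r)) =
        1 + (\<Sum>r\<in>{p..<k}. (3/2::real)^(Suc k - Suc r))"
      using pk by (simp add: atLeastLessThanSuc)
    also have "(\<Sum>r\<in>{p..<k}. (3/2::real)^(Suc k - Suc r)) = (\<Sum>r\<in>{p..<k}. 3/2 * (3/2::real)^(k - Suc r))"
    proof (intro sum.cong refl)
      fix r assume "r \<in> {p..<k}"
      then have "Suc k - Suc r = Suc (k - Suc r)" by auto
      then show "(3/2::real)^(Suc k - Suc r) = 3/2 * (3/2::real)^(k - Suc r)" by simp
    qed
    also have "\<dots> = 3/2 * (\<Sum>r\<in>{p..<k}. (3/2::real)^(k - Suc r))"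
      by (rule sum_distrib_left[symmetric])
    also have "\<dots> = 3/2 * (2*(3/2)^(k-p) - 2)"
      using Suc.IH[OF pk] by simp
    finally have e: "(\<Sum>r\<in>{p..<Suc k}. (3/2::real)^(Suc k - Suc r)) = 1 + 3/2 * (2*(3/2)^(k-p) - 2)" .
    have "Suc k - p = Suc (k - p)" using pk by simp
    then have pw: "(3/2::real)^(Suc k - p) = 3/2 * (3/2)^(k-p)" by simp
    show ?thesis unfolding pw e by (simp add: algebra_simps)
  qed
qed



lemma count:
  assumes "length a \<le> k"
  shows "real (card (succset n k t a d)) \<le> 6^d * (3/2)^(k - length a)"
  using assms
proof (induction t arbitrary: a d)
  case (Out x)
  have "succset n k (Out x) a d \<subseteq> {x}" by (auto simp: succset_def)
  then have "card (succset n k (Out x) a d) \<le> 1" using card_mono[of "{x}"] by fastforce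
  moreover have "(1::real) \<le> 6^d * (3/2)^(k - length a)"
  proof -
    have "(1::real) \<le> 6^d" by simp
    moreover have "(1::real) \<le> (3/2)^(k - length a)" by simp
    ultimately have "(1::real) * 1 \<le> 6^d * (3/2)^(k - length a)"
      by (intro mult_mono) auto
    then show ?thesis by simp
  qed
  ultimately show ?case by linarith
next
  case (Ask v g)
  show ?case
  proof (cases d)
    case 0
    then have "succset n k (Ask v g) a d = {}" by (auto simp del: run.simps simp add: succset_def run_Ask)
    then show ?thesis by simp
  next
    case (Suc d')
    define p where "p = length a"
    define Sa where "Sa = {s \<in> grid 2 k. take p s = a}"
    define key where "key s = (cpl s v, take (Suc (cpl s v)) s)" for s
    define A where "A s = (if cpl s v < p then a else take (Suc (cpl s v)) s)" for s
    define w where "w (\<kappa>::nat \<times> nat list) = (6::real)^d' * (3/2)^(k - (if fst \<kappa> < p then p else min (Suc (fst \<kappa>)) k))" for \<kappa>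
    define H where "H \<kappa> = {s \<in> succset n k (Ask v g) a d. key s = \<kappa>}" for \<kappa>
    have pk: "p \<le> k" using Ask.prems p_def by simp
    have finSa: "finite Sa" unfolding Sa_def using finite_grid by auto
    have finss: "finite (succset n k t b e)" for t b e
      unfolding succset_def using finite_grid by auto
    have sub: "succset n k (Ask v g) a d \<subseteq> (\<Union>\<kappa>\<in>key ` Sa. H \<kappa>)"
      by (auto simp: succset_def Sa_def H_def p_def)
    have Hb: "real (card (H \<kappa>)) \<le> w \<kappa>" if kS: "\<kappa> \<in> key ` Sa" for \<kappa>
    proof -
      obtain s0 where s0: "s0 \<in> Sa" "key s0 = \<kappa>" using kS by auto
      have ls0: "length s0 = k" using s0 unfolding Sa_def grid_alt by auto
      have HS: "H \<kappa> \<subseteq> succset n k (g (orc n k s0 v)) (A s0) d'"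
      proof
        fix s assume sH: "s \<in> H \<kappa>"
        then have sg: "s \<in> grid 2 k" and ta: "take p s = a" and ks: "key s = key s0"
          and sr: "snd (run (orc n k s) (Ask v g)) \<le> d" and fr: "fst (run (orc n k s) (Ask v g)) = s"
          using s0 by (auto simp: H_def succset_def p_def)
        have ls: "length s = k" using sg unfolding grid_alt by auto
        have c: "cpl s v = cpl s0 v" and tk: "take (Suc (cpl s0 v)) s0 = take (Suc (cpl s0 v)) s"
          using ks by (auto simp: key_def)
        have "Fo n s0 v = Fo n s v" using Fo_agree[of s0 s v n] ls ls0 tk by auto
        then have oe: "orc n k s v = orc n k s0 v" by (simp add: orc_def)
        have tA: "take (length (A s0)) s = A s0"
        proof (cases "cpl s0 v < p")
          case True
          then show ?thesis using ta by (simp add: A_def p_def)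
        next
          case False
          then show ?thesis using tk by (simp add: A_def min_def ls ls0)
        qed
        show "s \<in> succset n k (g (orc n k s0 v)) (A s0) d'"
          using sg tA sr fr oe Suc by (simp del: run.simps add: succset_def run_Ask)
      qed
      have lA: "length (A s0) = (if fst \<kappa> < p then p else min (Suc (fst \<kappa>)) k)"
        using s0(2) ls0 by (auto simp: A_def key_def p_def)
      have lAk: "length (A s0) \<le> k" using lA pk by auto
      have "real (card (H \<kappa>)) \<le> real (card (succset n k (g (orc n k s0 v)) (A s0) d'))"
        using card_mono[OF finss HS] by simp
      also have "\<dots> \<le> 6^d' * (3/2)^(k - length (A s0))" using Ask.IH[OF _ lAk] by simp
      also have "\<dots> = w \<kappa>" unfolding w_def lA ..
      finally show ?thesis .
    qed
    have "card (succset n k (Ask v g) a d) \<le> card (\<Union>\<kappa>\<in>key ` Sa. H \<kappa>)"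
    proof (rule card_mono[OF _ sub])
      have "(\<Union>\<kappa>\<in>key ` Sa. H \<kappa>) \<subseteq> succset n k (Ask v g) a d" by (auto simp: H_def)
      then show "finite (\<Union>\<kappa>\<in>key ` Sa. H \<kappa>)" using finss finite_subset by blast
    qed
    also have "\<dots> \<le> (\<Sum>\<kappa>\<in>key ` Sa. card (H \<kappa>))" by (rule card_UN_le) (use finSa in auto)
    finally have "real (card (succset n k (Ask v g) a d)) \<le> (\<Sum>\<kappa>\<in>key ` Sa. real (card (H \<kappa>)))"
      by (metis of_nat_le_iff of_nat_sum)
    also have "\<dots> \<le> (\<Sum>\<kappa>\<in>key ` Sa. w \<kappa>)" by (rule sum_mono) (rule Hb)
    also have "\<dots> \<le> 6^d * (3/2)^(k - p)"
    proof (cases "\<exists>s0\<in>Sa. cpl s0 v < p")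
      case True
      then obtain s0 where s0: "s0 \<in> Sa" "cpl s0 v < p" by auto
      have ls0: "length s0 = k" using s0 unfolding Sa_def grid_alt by auto
      have kk: "key s = key s0" if sS: "s \<in> Sa" for s
      proof -
        have ls: "length s = k" using sS unfolding Sa_def grid_alt by auto
        have "take p s = take p s0" using sS s0 by (simp add: Sa_def)
        then have "take (Suc (cpl s0 v)) (take p s) = take (Suc (cpl s0 v)) (take p s0)" by simp
        then have tk: "take (Suc (cpl s0 v)) s0 = take (Suc (cpl s0 v)) s"
          using s0(2) by (simp add: min_def)
        have "cpl s v = cpl s0 v" using Fo_agree[of s0 s v n] ls ls0 tk by auto
        then show ?thesis using tk by (simp add: key_def)
      qed
      have "key ` Sa = (\<lambda>_. key s0) ` Sa" by (rule image_cong[OF refl kk])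
      also have "\<dots> = {key s0}" using s0(1) by auto
      finally have "key ` Sa = {key s0}" .
      then have "(\<Sum>\<kappa>\<in>key ` Sa. w \<kappa>) = w (key s0)" by simp
      also have "\<dots> = 6^d' * (3/2)^(k - p)" using s0(2) by (simp add: w_def key_def)
      also have "\<dots> \<le> 6^d * (3/2)^(k - p)" using Suc by simp
      finally show ?thesis .
    next
      case False
      define f where "f = (\<lambda>(r::nat, c::nat). (r, take r v @ [c]))"
      define X where "X = {p..<k} \<times> {0::nat,1}"
      have wnn: "0 \<le> w \<kappa>" for \<kappa> by (simp add: w_def)
      have ksub: "key ` Sa \<subseteq> insert (k, take k v) (f ` X)"
      proof
        fix \<kappa> assume "\<kappa> \<in> key ` Sa"
        then obtain s where sS: "s \<in> Sa" and ks: "\<kappa> = key s" by auto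
        have ls: "length s = k" using sS unfolding Sa_def grid_alt by auto
        have rp: "p \<le> cpl s v" using False sS by auto
        have rk: "cpl s v \<le> k" using cpl_le[of s v] ls by simp
        show "\<kappa> \<in> insert (k, take k v) (f ` X)"
        proof (cases "cpl s v = k")
          case True
          then have "take (Suc (cpl s v)) s = take k v" using cpl_take[of s v] ls by simp
          then show ?thesis using True ks by (simp add: key_def)
        next
          case False
          then have lt: "cpl s v < length s" using rk ls by simp
          have "take (Suc (cpl s v)) s = take (cpl s v) v @ [s ! cpl s v]"
            using take_Suc_conv_app_nth[OF lt] cpl_take[of s v] by simp
          moreover have "s ! cpl s v < 2" using sS lt ls unfolding Sa_def grid_def by auto
          ultimately have "key s = f (cpl s v, s ! cpl s v)" "(cpl s v, s ! cpl s v) \<in> X"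
            using rp lt ls by (auto simp: key_def f_def X_def)
          then show ?thesis using ks by blast
        qed
      qed
      have finX: "finite X" by (simp add: X_def)
      have "(\<Sum>\<kappa>\<in>key ` Sa. w \<kappa>) \<le> (\<Sum>\<kappa>\<in>insert (k, take k v) (f ` X). w \<kappa>)"
        by (rule sum_mono2) (use finX ksub wnn in auto)
      also have "\<dots> \<le> w (k, take k v) + (\<Sum>\<kappa>\<in>f ` X. w \<kappa>)"
        by (simp add: sum.insert_if finX wnn)
      also have "(\<Sum>\<kappa>\<in>f ` X. w \<kappa>) \<le> (\<Sum>x\<in>X. (w \<circ> f) x)"
        by (rule sum_image_le) (use finX wnn in auto)
      also have "(\<Sum>x\<in>X. (w \<circ> f) x) = (\<Sum>x\<in>X. 6^d' * (3/2)^(k - Suc (fst x)))"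
        by (intro sum.cong refl) (auto simp: X_def f_def w_def)
      also have "\<dots> = (\<Sum>r\<in>{p..<k}. \<Sum>c\<in>{0::nat,1}. 6^d' * (3/2)^(k - Suc r))"
        unfolding X_def by (subst sum.cartesian_product) (simp add: case_prod_beta)
      also have "\<dots> = 2 * 6^d' * (\<Sum>r\<in>{p..<k}. (3/2::real)^(k - Suc r))"
        by (simp add: sum_distrib_left mult.assoc)
      also have "\<dots> = 2 * 6^d' * (2*(3/2)^(k-p) - 2)" using geo[OF pk] by simp
      also have "w (k, take k v) = 6^d'" using pk by (simp add: w_def)
      finally have le: "(\<Sum>\<kappa>\<in>key ` Sa. w \<kappa>) \<le> 6^d' + 2 * 6^d' * (2*(3/2)^(k-p) - 2)"
        by simp
      have y1: "(1::real) \<le> (3/2)^(k-p)" by simp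
      have "(6::real)^d' + 2 * 6^d' * (2*(3/2)^(k-p) - 2) = 6^d' * (4 * (3/2)^(k-p) - 3)"
        by (simp add: algebra_simps)
      also have "\<dots> \<le> 6^d' * (6 * (3/2)^(k-p))"
        by (rule mult_left_mono) (use y1 in linarith, simp)
      also have "\<dots> = 6^d * (3/2)^(k-p)" using Suc by simp
      finally show ?thesis using le by linarith
    qed
    finally show ?thesis by (simp add: p_def)
  qed
qed



lemma bound_aux:
  assumes "k \<noteq> 0"
  shows "(6::real)^((k - 1) div 13) * (3/2)^k \<le> 3/4 * 2^k"
proof -
  define d where "d = (k - 1) div 13"
  obtain m where km: "k = Suc m" using assms by (cases k) auto
  have dm: "13 * d \<le> m" unfolding d_def km by simp
  have "(3/4::real)^m \<le> (3/4)^(13*d)" by (rule power_decreasing[OF dm]) auto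
  then have a: "(3/4::real)^k \<le> 3/4 * (3/4)^(13*d)" unfolding km by simp
  have b: "(6::real)^d * (3/4)^(13*d) = (6 * (3/4)^13)^d"
    by (simp add: power_mult power_mult_distrib)
  have c: "(6 * (3/4::real)^13)^d \<le> 1" by (rule power_le_one) (simp_all add: power_divide)
  have "(6::real)^d * (3/4)^k \<le> 6^d * (3/4 * (3/4)^(13*d))"
    by (rule mult_left_mono[OF a]) simp
  also have "\<dots> = 3/4 * ((6::real)^d * (3/4)^(13*d))" by simp
  also have "\<dots> \<le> 3/4" using b c by simp
  finally have e: "(6::real)^d * (3/4)^k \<le> 3/4" .
  have "(3/2::real)^k = (3/4)^k * 2^k" by (simp add: power_mult_distrib[symmetric])
  then have "(6::real)^d * (3/2)^k = ((6::real)^d * (3/4)^k) * 2^k" by simp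
  also have "\<dots> \<le> 3/4 * 2^k" by (rule mult_right_mono[OF e]) simp
  finally show ?thesis unfolding d_def .
qed

theorem corollary8:
  shows "\<exists>c::real. c > 0 \<and>
    (\<forall>n k::nat. n \<ge> 2 \<longrightarrow> rand_query_complexity n k \<ge> ennreal (c * real k))"
proof -
  have main: "ennreal (real k / 100) \<le> rand_query_complexity n k" if n2: "2 \<le> n" for n k
  proof (cases "k = 0")
    case True
    then show ?thesis by simp
  next
    case False
    define d where "d = (k - 1) div 13"
    define E where "E s = {t. snd (run (orc n k s) t) \<le> d \<and> fst (run (orc n k s) t) = s}" for s
    define B where "B = grid 2 k"
    have finB: "finite B" unfolding B_def by (rule finite_grid)
    have cardB: "card B = 2^k" unfolding B_def by (rule card_grid)
    have Bne: "B \<noteq> {}" using cardB by auto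
    have bound: "(6::real)^d * (3/2)^k \<le> 3/4 * 2^k" unfolding d_def by (rule bound_aux[OF False])
    show ?thesis unfolding rand_query_complexity_def
    proof (rule INF_greatest)
      fix A assume "A \<in> {A. valid_alg n k A}"
      then have val: "\<And>f. tarski_input n k f \<Longrightarrow> success_prob n k A f \<ge> 9/10"
        by (simp add: valid_alg_def)
      have intI: "integrable (measure_pmf A) (indicator X :: qtree \<Rightarrow> real)" for X
        by (rule integrable_real_indicator) (simp_all add: measure_pmf.emeasure_eq_measure)
      have ex: "\<exists>s\<in>B. measure_pmf.prob A (E s) \<le> 3/4"
      proof (rule ccontr)
        assume "\<not> ?thesis"
        then have gt: "\<forall>s\<in>B. 3/4 < measure_pmf.prob A (E s)" by auto
        have "(\<Sum>s\<in>B. (3/4::real)) < (\<Sum>s\<in>B. measure_pmf.prob A (E s))"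
          by (rule sum_strict_mono) (use finB Bne gt in auto)
        also have "(\<Sum>s\<in>B. measure_pmf.prob A (E s)) = (\<Sum>s\<in>B. (\<integral>t. indicator (E s) t \<partial>measure_pmf A))"
          by (simp add: integral_indicator)
        also have "\<dots> = (\<integral>t. (\<Sum>s\<in>B. indicator (E s) t) \<partial>measure_pmf A)"
        proof -
          have "(\<integral>t. (\<Sum>s\<in>B. indicator (E s) t :: real) \<partial>measure_pmf A) = (\<Sum>s\<in>B. (\<integral>t. indicator (E s) t \<partial>measure_pmf A))"
            using Bochner_Integration.integral_sum[where I=B and M="measure_pmf A" and f="\<lambda>s t. indicator (E s) t :: real"] intI by simp
          then show ?thesis by simp
        qed
        also have "\<dots> \<le> 6^d * (3/2)^k"
        proof (rule measure_pmf.integral_le_const)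
          show "integrable (measure_pmf A) (\<lambda>t. \<Sum>s\<in>B. indicator (E s) t :: real)"
            by (rule Bochner_Integration.integrable_sum) (rule intI)
          show "AE t in measure_pmf A. (\<Sum>s\<in>B. indicator (E s) t :: real) \<le> 6^d * (3/2)^k"
          proof (rule AE_I2)
            fix t
            have "(\<Sum>s\<in>B. indicator (E s) t :: real) = (\<Sum>s\<in>B. if t \<in> E s then 1 else 0)"
              by (simp only: indicator_def of_bool_def)
            also have "\<dots> = (\<Sum>s\<in>{s\<in>B. t \<in> E s}. 1)"
              by (rule sum.inter_filter[symmetric]) (rule finB)
            also have "\<dots> = real (card {s\<in>B. t \<in> E s})" by simp
            also have "{s\<in>B. t \<in> E s} = succset n k t [] d"
              by (auto simp: succset_def E_def B_def)
            also have "real (card (succset n k t [] d)) \<le> 6^d * (3/2)^(k - length ([]::nat list))"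
              by (rule count) simp
            finally show "(\<Sum>s\<in>B. indicator (E s) t :: real) \<le> 6^d * (3/2)^k" by simp
          qed
        qed
        also have "\<dots> \<le> 3/4 * 2^k" by (rule bound)
        also have "\<dots> = (\<Sum>s\<in>B. (3/4::real))" using cardB by simp
        finally show False by simp
      qed
      then obtain s where sB: "s \<in> B" and ps: "measure_pmf.prob A (E s) \<le> 3/4" by auto
      have ti: "tarski_input n k (orc n k s)" using orc_tarski[OF n2] sB by (simp add: B_def)
      have sp: "9/10 \<le> success_prob n k A (orc n k s)" using val[OF ti] .
      define Q where "Q = {t. d < snd (run (orc n k s) t)}"
      have "{t. fst (run (orc n k s) t) \<in> grid n k \<and> orc n k s (fst (run (orc n k s) t)) = fst (run (orc n k s) t)}
            \<subseteq> E s \<union> Q"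
      proof
        fix t assume "t \<in> {t. fst (run (orc n k s) t) \<in> grid n k \<and> orc n k s (fst (run (orc n k s) t)) = fst (run (orc n k s) t)}"
        then have "fst (run (orc n k s) t) = s" using orc_fix[of s k "fst (run (orc n k s) t)" n] sB
          by (auto simp: B_def)
        then show "t \<in> E s \<union> Q" by (auto simp: E_def Q_def)
      qed
      then have "success_prob n k A (orc n k s) \<le> measure_pmf.prob A (E s \<union> Q)"
        unfolding success_prob_def by (rule measure_pmf.finite_measure_mono) simp
      also have "\<dots> \<le> measure_pmf.prob A (E s) + measure_pmf.prob A Q"
        by (rule measure_Un_le) simp_all
      finally have pQ: "3/20 \<le> measure_pmf.prob A Q" using sp ps by linarith
      have "ennreal (real (Suc d) * measure_pmf.prob A Q) = (\<integral>\<^sup>+t. ennreal (real (Suc d)) * indicator Q t \<partial>measure_pmf A)"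
        by (simp add: nn_integral_cmult_indicator measure_pmf.emeasure_eq_measure ennreal_mult)
      also have "\<dots> \<le> (\<integral>\<^sup>+t. ennreal (real (snd (run (orc n k s) t))) \<partial>measure_pmf A)"
      proof (rule nn_integral_mono)
        fix t
        show "ennreal (real (Suc d)) * indicator Q t \<le> ennreal (real (snd (run (orc n k s) t)))"
        proof (cases "t \<in> Q")
          case True
          then have "real (Suc d) \<le> real (snd (run (orc n k s) t))" by (simp add: Q_def)
          then have "ennreal (real (Suc d)) \<le> ennreal (real (snd (run (orc n k s) t)))"
            by (rule ennreal_leI)
          then show ?thesis using True by (simp only: indicator_simps mult_1_right)
        next
          case False
          then show ?thesis by (simp add: indicator_def)
        qed
      qed
      also have "\<dots> = expected_queries A (orc n k s)" by (simp add: expected_queries_def)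
      finally have EQ: "ennreal (real (Suc d) * measure_pmf.prob A Q) \<le> expected_queries A (orc n k s)" .
      have kd: "real k \<le> 13 * real (Suc d)" unfolding d_def using False by simp
      have "real k / 100 \<le> real (Suc d) * measure_pmf.prob A Q"
      proof -
        have "real (Suc d) * (3/20) \<le> real (Suc d) * measure_pmf.prob A Q"
          by (rule mult_left_mono[OF pQ]) simp
        then show ?thesis using kd by linarith
      qed
      then have "ennreal (real k / 100) \<le> expected_queries A (orc n k s)"
        using EQ ennreal_leI order_trans by blast
      also have "\<dots> \<le> (SUP f\<in>{f. tarski_input n k f}. expected_queries A f)"
        by (rule SUP_upper) (simp add: ti)
      finally show "ennreal (real k / 100) \<le> (SUP f\<in>{f. tarski_input n k f}. expected_queries A f)" .
    qed
  qed
  show ?thesis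
  proof (intro exI[of _ "1/100"] conjI allI impI)
    show "(0::real) < 1/100" by simp
    fix n k :: nat assume "2 \<le> n"
    then show "ennreal (1/100 * real k) \<le> rand_query_complexity n k" using main by simp
  qed
qed

end
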